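(* Let $n\geq 2$, $1\leq k\leq n-1$ and $w\in\mathfrak{S}_n$. The subsequence of $w$ formed by all its $k$-peaks and $k$-valleys (in the order they appear in $w$) is a longest $k$-zigzagging subsequence of $w$; i.e., $zs_k(w)$ equals the number of $k$-peaks plus the number of $k$-valleys of $w$. Consequently, $E_n(zs_k)$ is two times the average number of $k$-peaks of a permutation in $\mathfrak{S}_n$, i.e. $E_n(zs_k)=\frac{2}{n!}\sum_{w\in\mathfrak{S}_n}\#\{k\text{-peaks of }w\}$.
   Context: $\mathfrak{S}_n$ is the set of permutations $w=w_1\cdots w_n$ of $\{1,\dots,n\}$. A section of $w$ is a consecutive block $w_s\cdots w_t$ ($s\le t$). A section $w_s\cdots w_t$ is a $k$-up if $s<t$ and $w_t-w_s\geq k$, and a $k$-down if $s<t$ and $w_s-w_t\geq k$; a $k$-up/$k$-down "in" $w_a\cdots w_b$ means one $w_s\cdots w_t$ with $a\le s<t\le b$. A section $w_i\cdots w_j$ ($i<j$) is $k$-ascending if $w_i=\min\{w_i,\dots,w_j\}$, $w_j=\max\{w_i,\dots,w_j\}$, $w_j-w_i\geq k$, and there is no $k$-down in it; it is $k$-descending if $w_i=\max$, $w_j=\min$ of $\{w_i,\dots,w_j\}$, $w_i-w_j\geq k$, and there is no $k$-up in it. Such a section is maximal if not contained in another section of the same type. If $w_i\cdots w_j$ is maximal $k$-ascending, $w_i$ is a $k$-valley and $w_j$ a $k$-peak of $w$; if it is maximal $k$-descending, $w_i$ is a $k$-peak and $w_j$ a $k$-valley of $w$. A subsequence $w_{i_1}\cdots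 w_{i_s}$ ($i_1<\dots<i_s$) is zigzagging if $w_{i_1}>w_{i_2}<w_{i_3}>\cdots$ or $w_{i_1}<w_{i_2}>w_{i_3}<\cdots$, and $k$-zigzagging if moreover $|w_{i_j}-w_{i_{j+1}}|\geq k$ for all $j$. $zs_k(w)$ is the maximal length of a $k$-zigzagging subsequence of $w$, and $E_n(zs_k)=\frac1{n!}\sum_{w\in\mathfrak{S}_n}zs_k(w)$. *)

theory Defs
  imports Complex_Main "HOL-Combinatorics.Multiset_Permutations" "HOL-Library.Sublist"
begin

text \<open>Permutations of {1..n} are lists w with w ! 0, ..., w ! (n-1) (0-based positions).
  Values are compared as integers to avoid truncated subtraction.\<close>

definition k_up :: "nat \<Rightarrow> nat list \<Rightarrow> nat \<Rightarrow> nat \<Rightarrow> bool" where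
  "k_up k w s t \<longleftrightarrow> s < t \<and> t < length w \<and> int (w ! t) - int (w ! s) \<ge> int k"

definition k_down :: "nat \<Rightarrow> nat list \<Rightarrow> nat \<Rightarrow> nat \<Rightarrow> bool" where
  "k_down k w s t \<longleftrightarrow> s < t \<and> t < length w \<and> int (w ! s) - int (w ! t) \<ge> int k"

definition k_ascending :: "nat \<Rightarrow> nat list \<Rightarrow> nat \<Rightarrow> nat \<Rightarrow> bool" where
  "k_ascending k w i j \<longleftrightarrow> i < j \<and> j < length w \<and>
     w ! i = Min ((!) w ` {i..j}) \<and> w ! j = Max ((!) w ` {i..j}) \<and>
     int (w ! j) - int (w ! i) \<ge> int k \<and>
     \<not> (\<exists>s t. i \<le> s \<and> s < t \<and> t \<le> j \<and> k_down k w s t)"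

definition k_descending :: "nat \<Rightarrow> nat list \<Rightarrow> nat \<Rightarrow> nat \<Rightarrow> bool" where
  "k_descending k w i j \<longleftrightarrow> i < j \<and> j < length w \<and>
     w ! i = Max ((!) w ` {i..j}) \<and> w ! j = Min ((!) w ` {i..j}) \<and>
     int (w ! i) - int (w ! j) \<ge> int k \<and>
     \<not> (\<exists>s t. i \<le> s \<and> s < t \<and> t \<le> j \<and> k_up k w s t)"

definition max_k_ascending :: "nat \<Rightarrow> nat list \<Rightarrow> nat \<Rightarrow> nat \<Rightarrow> bool" where
  "max_k_ascending k w i j \<longleftrightarrow> k_ascending k w i j \<and>
     \<not> (\<exists>i' j'. i' \<le> i \<and> j \<le> j' \<and> (i', j') \<noteq> (i, j) \<and> k_ascending k w i' j')"

definition max_k_descending :: "nat \<Rightarrow> nat list \<Rightarrow> nat \<Rightarrow> nat \<Rightarrow> bool" where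
  "max_k_descending k w i j \<longleftrightarrow> k_descending k w i j \<and>
     \<not> (\<exists>i' j'. i' \<le> i \<and> j \<le> j' \<and> (i', j') \<noteq> (i, j) \<and> k_descending k w i' j')"

definition k_peaks :: "nat \<Rightarrow> nat list \<Rightarrow> nat set" where
  "k_peaks k w = {p. (\<exists>i. max_k_ascending k w i p) \<or> (\<exists>j. max_k_descending k w p j)}"

definition k_valleys :: "nat \<Rightarrow> nat list \<Rightarrow> nat set" where
  "k_valleys k w = {p. (\<exists>j. max_k_ascending k w p j) \<or> (\<exists>i. max_k_descending k w i p)}"

definition zigzagging :: "nat list \<Rightarrow> bool" where
  "zigzagging xs \<longleftrightarrow>
     (\<forall>j. Suc j < length xs \<longrightarrow> (if even j then xs ! j > xs ! Suc j else xs ! j < xs ! Suc j)) \<or>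
     (\<forall>j. Suc j < length xs \<longrightarrow> (if even j then xs ! j < xs ! Suc j else xs ! j > xs ! Suc j))"

definition k_zigzagging :: "nat \<Rightarrow> nat list \<Rightarrow> bool" where
  "k_zigzagging k xs \<longleftrightarrow> zigzagging xs \<and>
     (\<forall>j. Suc j < length xs \<longrightarrow> \<bar>int (xs ! j) - int (xs ! Suc j)\<bar> \<ge> int k)"

definition zs :: "nat \<Rightarrow> nat list \<Rightarrow> nat" where
  "zs k w = Max {length ys | ys. subseq ys w \<and> k_zigzagging k ys}"

definition E_zs :: "nat \<Rightarrow> nat \<Rightarrow> real" where
  "E_zs n k = (\<Sum>w\<in>permutations_of_set {1..n}. real (zs k w)) / fact n"

end

theory Submission
  imports Defs
begin


definition asc :: "nat \<Rightarrow> nat list \<Rightarrow> nat \<Rightarrow> nat \<Rightarrow> bool" where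
  "asc k w i j \<longleftrightarrow> i < j \<and> j < length w \<and> (\<forall>t. i \<le> t \<and> t \<le> j \<longrightarrow> w!i \<le> w!t \<and> w!t \<le> w!j)
     \<and> w!i + k \<le> w!j \<and> (\<forall>s t. i \<le> s \<and> s < t \<and> t \<le> j \<longrightarrow> w!s < w!t + k)"

definition dsc :: "nat \<Rightarrow> nat list \<Rightarrow> nat \<Rightarrow> nat \<Rightarrow> bool" where
  "dsc k w i j \<longleftrightarrow> i < j \<and> j < length w \<and> (\<forall>t. i \<le> t \<and> t \<le> j \<longrightarrow> w!j \<le> w!t \<and> w!t \<le> w!i)
     \<and> w!j + k \<le> w!i \<and> (\<forall>s t. i \<le> s \<and> s < t \<and> t \<le> j \<longrightarrow> w!t < w!s + k)"

lemma Min_img_iff: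
  assumes "i \<le> j" shows "(w!i = Min ((!) w ` {i..j})) \<longleftrightarrow> (\<forall>t. i \<le> t \<and> t \<le> j \<longrightarrow> w!i \<le> w!t)"
  using assms by (subst eq_commute, subst Min_eq_iff) auto

lemma Max_img_iff:
  assumes "i \<le> j" shows "(w!j = Max ((!) w ` {i..j})) \<longleftrightarrow> (\<forall>t. i \<le> t \<and> t \<le> j \<longrightarrow> w!t \<le> w!j)"
  using assms by (subst eq_commute, subst Max_eq_iff) auto

lemma Min_img_iff2:
  assumes "i \<le> j" shows "(w!j = Min ((!) w ` {i..j})) \<longleftrightarrow> (\<forall>t. i \<le> t \<and> t \<le> j \<longrightarrow> w!j \<le> w!t)"
  using assms by (subst eq_commute, subst Min_eq_iff) auto

lemma Max_img_iff2:
  assumes "i \<le> j" shows "(w!i = Max ((!) w ` {i..j})) \<longleftrightarrow> (\<forall>t. i \<le> t \<and> t \<le> j \<longrightarrow> w!t \<le> w!i)"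
  using assms by (subst eq_commute, subst Max_eq_iff) auto

lemma asc_eq: "k_ascending k w i j = asc k w i j"
proof (cases "i < j")
  case True
  then show ?thesis
  proof -
    have e1: "(w!i = Min ((!) w ` {i..j})) \<longleftrightarrow> (\<forall>t. i \<le> t \<and> t \<le> j \<longrightarrow> w!i \<le> w!t)"
      using Min_img_iff[of i j w] True by simp
    have e2: "(w!j = Max ((!) w ` {i..j})) \<longleftrightarrow> (\<forall>t. i \<le> t \<and> t \<le> j \<longrightarrow> w!t \<le> w!j)"
      using Max_img_iff[of i j w] True by simp
    have e3: "(\<exists>s t. i \<le> s \<and> s < t \<and> t \<le> j \<and> k_down k w s t) \<longleftrightarrow> \<not>(\<forall>s t. i \<le> s \<and> s < t \<and> t \<le> j \<longrightarrow> w!s < w!t + k)" if "j < length w"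
    proof -
      have "\<And>s t. k_down k w s t \<longleftrightarrow> s < t \<and> t < length w \<and> \<not> w!s < w!t + k"
        unfolding k_down_def by auto
      then show ?thesis using that by (meson le_less_trans)
    qed
    show ?thesis unfolding k_ascending_def asc_def e1 e2 using e3 by auto
  qed
qed (auto simp: k_ascending_def asc_def)

lemma dsc_eq: "k_descending k w i j = dsc k w i j"
proof (cases "i < j")
  case True
  then show ?thesis
  proof -
    have e1: "(w!j = Min ((!) w ` {i..j})) \<longleftrightarrow> (\<forall>t. i \<le> t \<and> t \<le> j \<longrightarrow> w!j \<le> w!t)"
      using Min_img_iff2[of i j w] True by simp
    have e2: "(w!i = Max ((!) w ` {i..j})) \<longleftrightarrow> (\<forall>t. i \<le> t \<and> t \<le> j \<longrightarrow> w!t \<le> w!i)"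
      using Max_img_iff2[of i j w] True by simp
    have e3: "(\<exists>s t. i \<le> s \<and> s < t \<and> t \<le> j \<and> k_up k w s t) \<longleftrightarrow> \<not>(\<forall>s t. i \<le> s \<and> s < t \<and> t \<le> j \<longrightarrow> w!t < w!s + k)" if "j < length w"
    proof -
      have "\<And>s t. k_up k w s t \<longleftrightarrow> s < t \<and> t < length w \<and> \<not> w!t < w!s + k"
        unfolding k_up_def by auto
      then show ?thesis using that by (meson le_less_trans)
    qed
    show ?thesis unfolding k_descending_def dsc_def e1 e2 using e3 by auto
  qed
qed (auto simp: k_descending_def dsc_def)

definition masc where "masc k w i j \<longleftrightarrow> asc k w i j \<and> \<not> (\<exists>i' j'. i' \<le> i \<and> j \<le> j' \<and> (i', j') \<noteq> (i, j) \<and> asc k w i' j')"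
definition mdsc where "mdsc k w i j \<longleftrightarrow> dsc k w i j \<and> \<not> (\<exists>i' j'. i' \<le> i \<and> j \<le> j' \<and> (i', j') \<noteq> (i, j) \<and> dsc k w i' j')"

lemma masc_eq: "max_k_ascending k w i j = masc k w i j"
  unfolding max_k_ascending_def masc_def asc_eq ..
lemma mdsc_eq: "max_k_descending k w i j = mdsc k w i j"
  unfolding max_k_descending_def mdsc_def dsc_eq ..

lemma peaks_eq: "k_peaks k w = {p. (\<exists>i. masc k w i p) \<or> (\<exists>j. mdsc k w p j)}"
  unfolding k_peaks_def masc_eq mdsc_eq ..
lemma valleys_eq: "k_valleys k w = {p. (\<exists>j. masc k w p j) \<or> (\<exists>i. mdsc k w i p)}"
  unfolding k_valleys_def masc_eq mdsc_eq ..



lemma asc_D: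
  assumes "asc k w i j"
  shows "i < j" "j < length w" "w!i + k \<le> w!j"
    "\<And>t. i \<le> t \<Longrightarrow> t \<le> j \<Longrightarrow> w!i \<le> w!t" "\<And>t. i \<le> t \<Longrightarrow> t \<le> j \<Longrightarrow> w!t \<le> w!j"
    "\<And>s t. i \<le> s \<Longrightarrow> s < t \<Longrightarrow> t \<le> j \<Longrightarrow> w!s < w!t + k"
  using assms unfolding asc_def by auto

lemma dsc_D:
  assumes "dsc k w i j"
  shows "i < j" "j < length w" "w!j + k \<le> w!i"
    "\<And>t. i \<le> t \<Longrightarrow> t \<le> j \<Longrightarrow> w!j \<le> w!t" "\<And>t. i \<le> t \<Longrightarrow> t \<le> j \<Longrightarrow> w!t \<le> w!i"
    "\<And>s t. i \<le> s \<Longrightarrow> s < t \<Longrightarrow> t \<le> j \<Longrightarrow> w!t < w!s + k"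
  using assms unfolding dsc_def by auto

lemma ascI:
  assumes "i < j" "j < length w" "w!i + k \<le> w!j"
    "\<And>t. i \<le> t \<Longrightarrow> t \<le> j \<Longrightarrow> w!i \<le> w!t" "\<And>t. i \<le> t \<Longrightarrow> t \<le> j \<Longrightarrow> w!t \<le> w!j"
    "\<And>s t. i \<le> s \<Longrightarrow> s < t \<Longrightarrow> t \<le> j \<Longrightarrow> w!s < w!t + k"
  shows "asc k w i j"
  using assms unfolding asc_def by auto

lemma dscI:
  assumes "i < j" "j < length w" "w!j + k \<le> w!i"
    "\<And>t. i \<le> t \<Longrightarrow> t \<le> j \<Longrightarrow> w!j \<le> w!t" "\<And>t. i \<le> t \<Longrightarrow> t \<le> j \<Longrightarrow> w!t \<le> w!i"
    "\<And>s t. i \<le> s \<Longrightarrow> s < t \<Longrightarrow> t \<le> j \<Longrightarrow> w!t < w!s + k"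
  shows "dsc k w i j"
  using assms unfolding dsc_def by auto

lemma finite_argmax:
  fixes f :: "'a \<Rightarrow> 'b::linorder"
  assumes "finite S" "S \<noteq> {}"
  shows "\<exists>x\<in>S. \<forall>y\<in>S. f y \<le> f x"
proof -
  have "Max (f ` S) \<in> f ` S" using assms by simp
  then obtain x where "x \<in> S" "f x = Max (f ` S)" by auto
  then show ?thesis using assms by (metis Max_ge finite_imageI image_eqI)
qed

lemma finite_argmin:
  fixes f :: "'a \<Rightarrow> 'b::linorder"
  assumes "finite S" "S \<noteq> {}"
  shows "\<exists>x\<in>S. \<forall>y\<in>S. f x \<le> f y"
proof -
  have "Min (f ` S) \<in> f ` S" using assms by simp
  then obtain x where "x \<in> S" "f x = Min (f ` S)" by auto
  then show ?thesis using assms by (metis Min_le finite_imageI image_eqI)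
qed

lemma merge_asc:
  assumes a1: "asc k w i j" and a2: "asc k w i' j'" and o: "i \<le> i'" "i' \<le> j" "j \<le> j'"
  shows "asc k w i j'"
proof (rule ascI)
  note A = asc_D[OF a1] and B = asc_D[OF a2]
  show "i < j'" using A(1) o by simp
  show "j' < length w" using B(2) .
  have ij: "w!j \<le> w!j'" using B(5)[of j] o by simp
  have ii: "w!i \<le> w!i'" using A(4)[of i'] o by simp
  show "w!i + k \<le> w!j'" using A(3) ij by simp
  fix t
  assume t: "i \<le> t" "t \<le> j'"
  show "w!i \<le> w!t"
  proof (cases "t \<le> j")
    case True then show ?thesis using A(4) t by simp
  next
    case False then show ?thesis using B(4)[of t] t o ii by simp
  qed
  show "w!t \<le> w!j'"
  proof (cases "t \<le> j")
    case True then show ?thesis using A(5)[of t] t ij by simp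
  next
    case False then show ?thesis using B(5)[of t] t o by simp
  qed
next
  note A = asc_D[OF a1] and B = asc_D[OF a2]
  fix s t assume st: "i \<le> s" "s < t" "t \<le> j'"
  show "w!s < w!t + k"
  proof (cases "t \<le> j")
    case True then show ?thesis using A(6) st by simp
  next
    case tj: False
    show ?thesis
    proof (cases "i' \<le> s")
      case True then show ?thesis using B(6) st by simp
    next
      case False
      then have "w!s \<le> w!j" using A(5)[of s] st o by simp
      moreover have "w!j < w!t + k" using B(6)[of j t] tj st o by simp
      ultimately show ?thesis by simp
    qed
  qed
qed

lemma ext_asc:
  assumes "asc k w i j"
  shows "\<exists>i' j'. i' \<le> i \<and> j \<le> j' \<and> masc k w i' j'"
proof -
  define S where "S = {(a,b). a \<le> i \<and> j \<le> b \<and> asc k w a b}"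
  have "S \<subseteq> {..i} \<times> {..<length w}" unfolding S_def using asc_D(2) by fastforce
  then have fin: "finite S" by (rule finite_subset) simp
  have ne: "(i,j) \<in> S" unfolding S_def using assms by simp
  obtain x where x: "x \<in> S" "\<forall>y\<in>S. (\<lambda>(a,b). b - a) y \<le> (\<lambda>(a,b). b - a) x"
    using finite_argmax[OF fin, of "\<lambda>(a,b). b - a"] ne by blast
  obtain a b where ab: "x = (a,b)" by force
  have xS: "a \<le> i" "j \<le> b" "asc k w a b" using x(1) ab unfolding S_def by auto
  have "masc k w a b"
    unfolding masc_def
  proof (intro conjI notI)
    show "asc k w a b" by fact
    assume "\<exists>i' j'. i' \<le> a \<and> b \<le> j' \<and> (i', j') \<noteq> (a, b) \<and> asc k w i' j'"
    then obtain i' j' where h: "i' \<le> a" "b \<le> j'" "(i', j') \<noteq> (a, b)" "asc k w i' j'" by blast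
    then have "(i',j') \<in> S" using xS unfolding S_def by auto
    then have "j' - i' \<le> b - a" using x(2) ab by fastforce
    moreover have "a < b" using asc_D(1)[OF xS(3)] .
    ultimately show False using h by auto
  qed
  then show ?thesis using xS by blast
qed

lemma masc_share:
  assumes m1: "masc k w i j" and m2: "masc k w i' j'" and p: "i \<le> p" "p \<le> j" "i' \<le> p" "p \<le> j'"
  shows "i = i' \<and> j = j'"
proof -
  have key: "i = i' \<and> j = j'" if m1: "masc k w i j" and m2: "masc k w i' j'" and o: "i \<le> i'" "i' \<le> j"
    for i j i' j'
  proof (cases "j \<le> j'")
    case True
    have a: "asc k w i j'" using merge_asc[of k w i j i' j'] m1 m2 o True unfolding masc_def by blast
    have "j' = j" using m1 a True unfolding masc_def by blast
    then show ?thesis using m2 o m1 unfolding masc_def by blast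
  next
    case False
    have "asc k w i j" using m1 unfolding masc_def by blast
    moreover have "\<not> (i \<le> i' \<and> j' \<le> j \<and> (i,j) \<noteq> (i',j') \<and> asc k w i j)"
      using m2 unfolding masc_def by blast
    ultimately have "(i, j) = (i', j')" using o False by auto
    then show ?thesis by simp
  qed
  show ?thesis
  proof (cases "i \<le> i'")
    case True then show ?thesis using key[OF m1 m2] p by simp
  next
    case False then show ?thesis using key[OF m2 m1] p by simp
  qed
qed

definition cpl :: "nat \<Rightarrow> nat list \<Rightarrow> nat list" where
  "cpl M w = map (\<lambda>x. M - x) w"

lemma cpl_len[simp]: "length (cpl M w) = length w" unfolding cpl_def by simp
lemma cpl_nth: "t < length w \<Longrightarrow> cpl M w ! t = M - w!t" unfolding cpl_def by simp

lemma cpl_asc: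
  assumes b: "\<forall>x\<in>set w. x \<le> M"
  shows "asc k (cpl M w) i j = dsc k w i j"
proof -
  have bt: "\<And>t. t < length w \<Longrightarrow> w!t \<le> M" using b by auto
  show ?thesis
    unfolding asc_def dsc_def cpl_len
  proof (intro iffI; elim conjE; intro conjI allI impI)
    assume h: "i < j" "j < length w"
      "\<forall>t. i \<le> t \<and> t \<le> j \<longrightarrow> cpl M w ! i \<le> cpl M w ! t \<and> cpl M w ! t \<le> cpl M w ! j"
      "cpl M w ! i + k \<le> cpl M w ! j"
      "\<forall>s t. i \<le> s \<and> s < t \<and> t \<le> j \<longrightarrow> cpl M w ! s < cpl M w ! t + k"
    show "i < j" "j < length w" by fact+
    show "w!j + k \<le> w!i" using h(4) h(1,2) bt[of i] bt[of j] by (simp add: cpl_nth)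
    fix t assume t: "i \<le> t \<and> t \<le> j"
    show "w!j \<le> w!t" "w!t \<le> w!i" using h(3)[rule_format, OF t] t h(1,2) bt[of i] bt[of j] bt[of t]
      by (auto simp add: cpl_nth)
  next
    assume h: "i < j" "j < length w"
      "\<forall>t. i \<le> t \<and> t \<le> j \<longrightarrow> cpl M w ! i \<le> cpl M w ! t \<and> cpl M w ! t \<le> cpl M w ! j"
      "cpl M w ! i + k \<le> cpl M w ! j"
      "\<forall>s t. i \<le> s \<and> s < t \<and> t \<le> j \<longrightarrow> cpl M w ! s < cpl M w ! t + k"
    fix s t assume st: "i \<le> s \<and> s < t \<and> t \<le> j"
    show "w!t < w!s + k" using h(5)[rule_format, OF st] st h(1,2) bt[of s] bt[of t]
      by (auto simp add: cpl_nth)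
  next
    assume h: "i < j" "j < length w"
      "\<forall>t. i \<le> t \<and> t \<le> j \<longrightarrow> w!j \<le> w!t \<and> w!t \<le> w!i"
      "w!j + k \<le> w!i"
      "\<forall>s t. i \<le> s \<and> s < t \<and> t \<le> j \<longrightarrow> w!t < w!s + k"
    show "i < j" "j < length w" by fact+
    show "cpl M w ! i + k \<le> cpl M w ! j" using h(4) h(1,2) bt[of i] bt[of j] by (simp add: cpl_nth)
    fix t assume t: "i \<le> t \<and> t \<le> j"
    show "cpl M w ! i \<le> cpl M w ! t" "cpl M w ! t \<le> cpl M w ! j"
      using h(3)[rule_format, OF t] t h(1,2) bt[of i] bt[of j] bt[of t]
      by (auto simp add: cpl_nth)
  next
    assume h: "i < j" "j < length w"
      "\<forall>t. i \<le> t \<and> t \<le> j \<longrightarrow> w!j \<le> w!t \<and> w!t \<le> w!i"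
      "w!j + k \<le> w!i"
      "\<forall>s t. i \<le> s \<and> s < t \<and> t \<le> j \<longrightarrow> w!t < w!s + k"
    fix s t assume st: "i \<le> s \<and> s < t \<and> t \<le> j"
    show "cpl M w ! s < cpl M w ! t + k" using h(5)[rule_format, OF st] st h(1,2) bt[of s] bt[of t]
      by (auto simp add: cpl_nth)
  qed
qed

lemma cpl_cpl:
  assumes b: "\<forall>x\<in>set w. x \<le> M"
  shows "cpl M (cpl M w) = w"
  unfolding cpl_def using b by (induction w) auto

lemma cpl_bound: "\<forall>x\<in>set (cpl M w). x \<le> M" unfolding cpl_def by auto

lemma cpl_distinct:
  assumes b: "\<forall>x\<in>set w. x \<le> M" and d: "distinct w"
  shows "distinct (cpl M w)"
  unfolding cpl_def using b d by (auto simp: distinct_map inj_on_def) (metis diff_diff_cancel)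

lemma cpl_dsc:
  assumes b: "\<forall>x\<in>set w. x \<le> M"
  shows "dsc k (cpl M w) i j = asc k w i j"
  using cpl_asc[of "cpl M w" M k i j, OF cpl_bound] cpl_cpl[OF b] by simp

lemma cpl_masc:
  assumes b: "\<forall>x\<in>set w. x \<le> M"
  shows "masc k (cpl M w) i j = mdsc k w i j"
  unfolding masc_def mdsc_def cpl_asc[OF b] ..

lemma cpl_mdsc:
  assumes b: "\<forall>x\<in>set w. x \<le> M"
  shows "mdsc k (cpl M w) i j = masc k w i j"
  unfolding masc_def mdsc_def cpl_dsc[OF b] ..

lemma cpl_peaks:
  assumes b: "\<forall>x\<in>set w. x \<le> M"
  shows "k_peaks k (cpl M w) = k_valleys k w"
  unfolding peaks_eq valleys_eq cpl_masc[OF b] cpl_mdsc[OF b] by auto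

lemma cpl_valleys:
  assumes b: "\<forall>x\<in>set w. x \<le> M"
  shows "k_valleys k (cpl M w) = k_peaks k w"
  unfolding peaks_eq valleys_eq cpl_masc[OF b] cpl_mdsc[OF b] by auto

lemma has_bound: "\<exists>M. \<forall>x\<in>set (w::nat list). x \<le> M"
  using member_le_sum_list by blast

lemma mdsc_share:
  assumes m1: "mdsc k w i j" and m2: "mdsc k w i' j'" and p: "i \<le> p" "p \<le> j" "i' \<le> p" "p \<le> j'"
  shows "i = i' \<and> j = j'"
proof -
  obtain M where b: "\<forall>x\<in>set w. x \<le> M" using has_bound by blast
  show ?thesis using masc_share[of k "cpl M w" i j i' j' p] m1 m2 p cpl_masc[OF b] by blast
qed



lemma in_peaks: "p \<in> k_peaks k w \<longleftrightarrow> (\<exists>i. masc k w i p) \<or> (\<exists>j. mdsc k w p j)"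
  unfolding peaks_eq by simp
lemma in_valleys: "p \<in> k_valleys k w \<longleftrightarrow> (\<exists>j. masc k w p j) \<or> (\<exists>i. mdsc k w i p)"
  unfolding valleys_eq by simp

lemma masc_asc: "masc k w i j \<Longrightarrow> asc k w i j" unfolding masc_def by simp
lemma mdsc_dsc: "mdsc k w i j \<Longrightarrow> dsc k w i j" unfolding mdsc_def by simp

lemma PV_lt: "p \<in> k_peaks k w \<union> k_valleys k w \<Longrightarrow> p < length w"
  unfolding in_peaks in_valleys Un_iff
  by (metis asc_D(1,2) dsc_D(1,2) masc_asc mdsc_dsc order.strict_trans)

lemma dist_eq: "distinct w \<Longrightarrow> i < length w \<Longrightarrow> j < length w \<Longrightarrow> w!i = w!j \<Longrightarrow> i = j"
  using nth_eq_iff_index_eq by blast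

lemma interior:
  assumes d: "distinct w" and m: "masc k w u j" and up: "u < p" "p < j"
    and pv: "p \<in> k_peaks k w \<union> k_valleys k w"
  shows False
proof -
  note A = asc_D[OF masc_asc[OF m]]
  have pl: "p < length w" using up A(2) by simp
  from pv consider (a) i where "masc k w i p" | (b) j' where "mdsc k w p j'"
    | (c) j' where "masc k w p j'" | (e) i where "mdsc k w i p"
    unfolding Un_iff in_peaks in_valleys by blast
  then show False
  proof cases
    case a
    have "i \<le> p" using asc_D(1)[OF masc_asc[OF a]] by simp
    then show False using masc_share[OF m a, of p] up by simp
  next
    case c
    have "p \<le> j'" using asc_D(1)[OF masc_asc[OF c]] by simp
    then show False using masc_share[OF m c, of p] up by simp
  next
    case b
    note D = dsc_D[OF mdsc_dsc[OF b]]
    show False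
    proof (cases "j' \<le> j")
      case True then show False using A(6)[of p j'] D(1,3) up by simp
    next
      case False
      have "w!j \<le> w!p" using D(5)[of j] False up by simp
      moreover have "w!p \<le> w!j" using A(5)[of p] up by simp
      ultimately show False using dist_eq[OF d pl A(2)] up by simp
    qed
  next
    case e
    note D = dsc_D[OF mdsc_dsc[OF e]]
    show False
    proof (cases "u \<le> i")
      case True then show False using A(6)[of i p] D(1,3) up by simp
    next
      case False
      have "w!p \<le> w!u" using D(4)[of u] False up by simp
      moreover have "w!u \<le> w!p" using A(4)[of p] up by simp
      ultimately show False using dist_eq[OF d pl, of u] up A(2) by simp
    qed
  qed
qed

lemma disjoint_PV:
  assumes d: "distinct w" and k: "0 < k" and p: "p \<in> k_peaks k w" "p \<in> k_valleys k w"
  shows False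
proof -
  from p(1) consider (a) i where "masc k w i p" | (b) j where "mdsc k w p j"
    unfolding in_peaks by blast
  then show False
  proof cases
    case a
    note A = asc_D[OF masc_asc[OF a]]
    from p(2) consider (c) j' where "masc k w p j'" | (e) i' where "mdsc k w i' p"
      unfolding in_valleys by blast
    then show False
    proof cases
      case c
      have "p \<le> j'" using asc_D(1)[OF masc_asc[OF c]] by simp
      then show False using masc_share[OF a c, of p] A(1) by simp
    next
      case e
      note D = dsc_D[OF mdsc_dsc[OF e]]
      show False
      proof (cases "i' \<le> i")
        case True then show False using D(4)[of i] A(1,3) k by simp
      next
        case False then show False using A(5)[of i'] D(1,3) k by simp
      qed
    qed
  next
    case b
    note D = dsc_D[OF mdsc_dsc[OF b]]
    from p(2) consider (c) j' where "masc k w p j'" | (e) i' where "mdsc k w i' p"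
      unfolding in_valleys by blast
    then show False
    proof cases
      case e
      have "i' \<le> p" using dsc_D(1)[OF mdsc_dsc[OF e]] by simp
      then show False using mdsc_share[OF b e, of p] D(1) by simp
    next
      case c
      note A = asc_D[OF masc_asc[OF c]]
      show False
      proof (cases "j \<le> j'")
        case True then show False using A(4)[of j] D(1,3) k by simp
      next
        case False then show False using D(5)[of j'] A(1,3) k by simp
      qed
    qed
  qed
qed

lemma desc_end_ext:
  assumes d: "distinct w" and k: "0 < k" and m: "mdsc k w i p" and s: "p < s" "s < length w" "w!s < w!p"
  shows "\<exists>r. p < r \<and> r < s \<and> w!p + k \<le> w!r"
proof (rule ccontr)
  assume nr: "\<not> (\<exists>r. p < r \<and> r < s \<and> w!p + k \<le> w!r)"
  note D = dsc_D[OF mdsc_dsc[OF m]]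
  define S0 where "S0 = {s'. p < s' \<and> s' \<le> s \<and> w!s' < w!p}"
  have "s \<in> S0" using s unfolding S0_def by simp
  then have fin: "finite S0" "S0 \<noteq> {}" unfolding S0_def by auto
  define s0 where "s0 = Min S0"
  have s0: "s0 \<in> S0" using fin unfolding s0_def by simp
  have s0min: "\<And>r. r \<in> S0 \<Longrightarrow> s0 \<le> r" using fin unfolding s0_def by simp
  have s0p: "p < s0" "s0 \<le> s" "w!s0 < w!p" using s0 unfolding S0_def by auto
  have mid: "w!p \<le> w!r" if "p < r" "r < s0" for r
  proof (rule ccontr)
    assume "\<not> w!p \<le> w!r"
    then have "r \<in> S0" using that s0p unfolding S0_def by simp
    then show False using s0min[of r] that by simp
  qed
  have midk: "w!r < w!p + k" if "p < r" "r \<le> s0" for r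
  proof (cases "r = s0")
    case True then show ?thesis using s0p by simp
  next
    case False
    then have "r < s" using that s0p by simp
    then show ?thesis using nr that by auto
  qed
  have lowp: "w!p \<le> w!a" if "i \<le> a" "a < s0" for a
  proof (cases "a \<le> p")
    case True then show ?thesis using D(4)[of a] that by simp
  next
    case False then show ?thesis using mid[of a] that by simp
  qed
  have "dsc k w i s0"
  proof (rule dscI)
    show "i < s0" using D(1) s0p by simp
    show "s0 < length w" using s0p s by simp
    show "w!s0 + k \<le> w!i" using D(3) s0p by simp
    fix t assume t: "i \<le> t" "t \<le> s0"
    show "w!s0 \<le> w!t"
    proof (cases "t = s0")
      case False then show ?thesis using lowp[of t] t s0p by simp
    qed simp
    show "w!t \<le> w!i"
    proof (cases "t \<le> p")
      case True then show ?thesis using D(5) t by simp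
    next
      case False then show ?thesis using midk[of t] t D(3) by simp
    qed
  next
    fix a b assume ab: "i \<le> a" "a < b" "b \<le> s0"
    show "w!b < w!a + k"
    proof (cases "b \<le> p")
      case True then show ?thesis using D(6) ab by simp
    next
      case False
      then have "w!b < w!p + k" using midk[of b] ab by simp
      moreover have "w!p \<le> w!a" using lowp[of a] ab by simp
      ultimately show ?thesis by simp
    qed
  qed
  moreover have "\<not> (i \<le> i \<and> p \<le> s0 \<and> (i, s0) \<noteq> (i, p) \<and> dsc k w i s0)"
    using m unfolding mdsc_def by blast
  ultimately show False using s0p by simp
qed

lemma next_valley:
  assumes d: "distinct w" and k: "0 < k" and v: "p \<in> k_valleys k w"
    and t: "p < t" "t < length w" "w!p + k \<le> w!t"
  shows "\<exists>j. masc k w p j"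
proof -
  from v consider (c) j where "masc k w p j" | (e) i where "mdsc k w i p"
    unfolding in_valleys by blast
  then show ?thesis
  proof cases
    case c then show ?thesis by blast
  next
    case e
    note D = dsc_D[OF mdsc_dsc[OF e]]
    define T where "T = {t'. p < t' \<and> t' < length w \<and> w!p + k \<le> w!t'}"
    have "t \<in> T" using t unfolding T_def by simp
    then have fin: "finite T" "T \<noteq> {}" unfolding T_def by auto
    define t0 where "t0 = Min T"
    have t0: "t0 \<in> T" using fin unfolding t0_def by simp
    have t0min: "\<And>r. r \<in> T \<Longrightarrow> t0 \<le> r" using fin unfolding t0_def by simp
    have t0p: "p < t0" "t0 < length w" "w!p + k \<le> w!t0" using t0 unfolding T_def by auto
    have below: "w!r < w!p + k" if "p < r" "r < t0" for r
    proof (rule ccontr)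
      assume "\<not> w!r < w!p + k"
      then have "r \<in> T" using that t0p unfolding T_def by simp
      then show False using t0min[of r] that by simp
    qed
    have above: "w!p \<le> w!r" if h: "p < r" "r < t0" for r
    proof (rule ccontr)
      assume "\<not> w!p \<le> w!r"
      then have "w!r < w!p" by simp
      moreover have "r < length w" using h t0p by simp
      ultimately obtain r' where r': "p < r'" "r' < r" "w!p + k \<le> w!r'"
        using desc_end_ext[OF d k e h(1)] by blast
      then show False using below[of r'] h by simp
    qed
    have "asc k w p t0"
    proof (rule ascI)
      show "p < t0" "t0 < length w" "w!p + k \<le> w!t0" using t0p by auto
      fix r assume r: "p \<le> r" "r \<le> t0"
      show "w!p \<le> w!r"
        using above[of r] r t0p by (cases "r = p"; cases "r = t0") auto
      show "w!r \<le> w!t0"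
        using below[of r] r t0p by (cases "r = p"; cases "r = t0") auto
    next
      fix a b assume ab: "p \<le> a" "a < b" "b \<le> t0"
      have "w!a < w!p + k" using below[of a] ab k by (cases "a = p") auto
      moreover have "w!p \<le> w!b" using above[of b] ab t0p by (cases "b = t0") auto
      ultimately show "w!a < w!b + k" by simp
    qed
    then obtain i' j' where ij: "i' \<le> p" "t0 \<le> j'" "masc k w i' j'" using ext_asc by blast
    note A = asc_D[OF masc_asc[OF ij(3)]]
    have "i' = p"
    proof (rule ccontr)
      assume ne: "i' \<noteq> p"
      show False
      proof (cases "i \<le> i'")
        case True
        have "w!p \<le> w!i'" using D(4)[of i'] True ij by simp
        moreover have "w!i' \<le> w!p" using A(4)[of p] ij t0p by simp
        ultimately show False using dist_eq[OF d, of i' p] ne ij D(2) by simp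
      next
        case False
        then show False using A(6)[of i p] D(1,3) ij t0p by simp
      qed
    qed
    then show ?thesis using ij by blast
  qed
qed

lemma end_valley:
  assumes d: "distinct w" and k: "0 < k" and v: "p \<in> k_valleys k w"
    and nt: "\<forall>t. p < t \<and> t < length w \<longrightarrow> w!t < w!p + k"
    and q: "q \<in> k_peaks k w \<union> k_valleys k w" "p < q"
  shows False
proof -
  from v consider (c) j where "masc k w p j" | (e) i where "mdsc k w i p"
    unfolding in_valleys by blast
  then show False
  proof cases
    case c
    note A = asc_D[OF masc_asc[OF c]]
    then show False using nt by auto
  next
    case e
    note D = dsc_D[OF mdsc_dsc[OF e]]
    have ql: "q < length w" using PV_lt[OF q(1)] .
    have ge: "w!p \<le> w!s" if h: "p < s" "s < length w" for s
    proof (rule ccontr)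
      assume "\<not> w!p \<le> w!s"
      then have "w!s < w!p" by simp
      then obtain r where "p < r" "r < s" "w!p + k \<le> w!r"
        using desc_end_ext[OF d k e h] by blast
      then show False using nt h by force
    qed
    from q(1) consider (a) a where "masc k w a q" | (b) b where "mdsc k w q b"
      | (c) b where "masc k w q b" | (e) a where "mdsc k w a q"
      unfolding Un_iff in_peaks in_valleys by blast
    then show False
    proof cases
      case a
      note A = asc_D[OF masc_asc[OF a]]
      show False
      proof (cases "p \<le> a")
        case True
        have "w!p \<le> w!a" using ge[of a] True A(1,2) by (cases "p = a") auto
        then show False using nt q(2) A(3) ql by force
      next
        case pa: False
        have wa: "w!a \<le> w!p" using A(4)[of p] pa q(2) by simp
        show False
        proof (cases "i \<le> a")
          case True
          have "w!p \<le> w!a" using D(4)[of a] True pa by simp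
          then show False using wa dist_eq[OF d, of a p] pa D(2) A(1,2) by simp
        next
          case False
          then show False using A(6)[of i p] D(1,3) pa q(2) by simp
        qed
      qed
    next
      case c
      note A = asc_D[OF masc_asc[OF c]]
      have "w!b < w!p + k" using nt q(2) A(1,2) by simp
      moreover have "w!p \<le> w!q" using ge[of q] q(2) ql by simp
      ultimately show False using A(3) by simp
    next
      case b
      note B = dsc_D[OF mdsc_dsc[OF b]]
      have "w!q < w!p + k" using nt q(2) ql by simp
      moreover have "w!p \<le> w!b" using ge[of b] q(2) B(1,2) by simp
      ultimately show False using B(3) by simp
    next
      case e
      note B = dsc_D[OF mdsc_dsc[OF e]]
      show False
      proof (cases "p \<le> a")
        case True
        have "w!a < w!p + k" using nt[rule_format, of a] True B(1,2) k by (cases "p = a") auto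
        moreover have "w!p \<le> w!q" using ge[of q] q(2) ql by simp
        ultimately show False using B(3) by simp
      next
        case False
        have "w!q \<le> w!p" using B(4)[of p] False q(2) by simp
        moreover have "w!p \<le> w!q" using ge[of q] q(2) ql by simp
        ultimately show False using dist_eq[OF d, of p q] q(2) ql by simp
      qed
    qed
  qed
qed

lemma consec_valley:
  assumes d: "distinct w" and k: "0 < k" and v: "p \<in> k_valleys k w"
    and q: "q \<in> k_peaks k w \<union> k_valleys k w" "p < q"
    and btw: "\<forall>r. p < r \<and> r < q \<longrightarrow> r \<notin> k_peaks k w \<union> k_valleys k w"
  shows "q \<in> k_peaks k w \<and> w!p + k \<le> w!q"
proof (cases "\<exists>t. p < t \<and> t < length w \<and> w!p + k \<le> w!t")
  case True
  then obtain t where "p < t" "t < length w" "w!p + k \<le> w!t" by blast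
  then obtain j where j: "masc k w p j" using next_valley[OF d k v] by blast
  note A = asc_D[OF masc_asc[OF j]]
  have jP: "j \<in> k_peaks k w" unfolding in_peaks using j by blast
  have "q = j"
  proof (rule ccontr)
    assume "q \<noteq> j"
    then consider "q < j" | "j < q" by linarith
    then show False
    proof cases
      case 1 then show False using interior[OF d j q(2) 1 q(1)] by simp
    next
      case 2 then show False using btw jP A(1) by blast
    qed
  qed
  then show ?thesis using jP A(3) by simp
next
  case False
  then have "\<forall>t. p < t \<and> t < length w \<longrightarrow> w!t < w!p + k" by auto
  then show ?thesis using end_valley[OF d k v _ q] by blast
qed

lemma consec_peak:
  assumes d: "distinct w" and k: "0 < k" and v: "p \<in> k_peaks k w"
    and q: "q \<in> k_peaks k w \<union> k_valleys k w" "p < q"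
    and btw: "\<forall>r. p < r \<and> r < q \<longrightarrow> r \<notin> k_peaks k w \<union> k_valleys k w"
  shows "q \<in> k_valleys k w \<and> w!q + k \<le> w!p"
proof -
  obtain M where b: "\<forall>x\<in>set w. x \<le> M" using has_bound by blast
  let ?c = "cpl M w"
  have U: "k_peaks k ?c \<union> k_valleys k ?c = k_peaks k w \<union> k_valleys k w"
    using cpl_peaks[OF b] cpl_valleys[OF b] by blast
  have vc: "p \<in> k_valleys k ?c" using v cpl_valleys[OF b] by simp
  have qc: "q \<in> k_peaks k ?c \<union> k_valleys k ?c" using q(1) U by simp
  have btwc: "\<forall>r. p < r \<and> r < q \<longrightarrow> r \<notin> k_peaks k ?c \<union> k_valleys k ?c" using btw U by simp
  have "q \<in> k_peaks k ?c \<and> ?c!p + k \<le> ?c!q"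
    using consec_valley[OF cpl_distinct[OF b d] k vc qc q(2) btwc] .
  moreover have "q < length w" using PV_lt[OF q(1)] .
  moreover have "w!p \<le> M" "w!q \<le> M" using b q(2) \<open>q < length w\<close> by auto
  ultimately show ?thesis using cpl_peaks[OF b] q(2) by (simp add: cpl_nth, linarith)
qed



lemma peakA:
  assumes d: "distinct w" and k: "0 < k" and ab: "a < b" "b < R" "R \<le> length w"
    and wab: "w!a + k \<le> w!b" and wR: "R < length w \<longrightarrow> w!R + k \<le> w!b"
  shows "\<exists>p. p \<in> k_peaks k w \<and> a < p \<and> p < R"
proof -
  obtain x where x: "x \<in> {a..<R}" "\<forall>t\<in>{a..<R}. w!t \<le> w!x"
    using finite_argmax[of "{a..<R}" "\<lambda>t. w!t"] ab by auto
  have wbx: "w!b \<le> w!x" using x ab by simp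
  define Y where "Y = {y. a \<le> y \<and> y \<le> x \<and> w!y + k \<le> w!x}"
  have aY: "a \<in> Y" unfolding Y_def using x wab wbx by simp
  have finY: "finite Y" unfolding Y_def by simp
  define y where "y = Max Y"
  have yY: "y \<in> Y" unfolding y_def using finY aY by (metis Max_in empty_iff)
  have ymax: "\<And>t. t \<in> Y \<Longrightarrow> t \<le> y" unfolding y_def using finY by simp
  have y: "a \<le> y" "y \<le> x" "w!y + k \<le> w!x" using yY unfolding Y_def by auto
  have yx: "y < x" using y k by (metis add_le_same_cancel1 le_neq_implies_less not_gr0 not_le)
  have above: "w!x < w!t + k" if "y < t" "t \<le> x" for t
  proof (rule ccontr)
    assume "\<not> w!x < w!t + k"
    then have "t \<in> Y" unfolding Y_def using that y by simp
    then show False using ymax[of t] that by simp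
  qed
  have xR: "x < R" "a \<le> x" using x by auto
  have "asc k w y x"
  proof (rule ascI)
    show "y < x" by fact
    show "x < length w" using xR ab by simp
    show "w!y + k \<le> w!x" using y by simp
    fix t assume t: "y \<le> t" "t \<le> x"
    show "w!t \<le> w!x" using x(2) t y xR by simp
    show "w!y \<le> w!t"
    proof (cases "t = y")
      case False then show ?thesis using above[of t] t y by simp
    qed simp
  next
    fix s t assume st: "y \<le> s" "s < t" "t \<le> x"
    have "w!s \<le> w!x" using x(2) st y xR by simp
    then show "w!s < w!t + k" using above[of t] st by simp
  qed
  then obtain i' j' where ij: "i' \<le> y" "x \<le> j'" "masc k w i' j'" using ext_asc by blast
  note A = asc_D[OF masc_asc[OF ij(3)]]
  have "j' = x"
  proof (cases "j' < R")
    case True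
    have "w!j' \<le> w!x" using x(2) True ij xR by simp
    moreover have "w!x \<le> w!j'" using A(5)[of x] ij y yx by simp
    ultimately show ?thesis using dist_eq[OF d, of j' x] A(2) xR ab by simp
  next
    case False
    then have "R < length w" using A(2) by simp
    then have "w!R + k \<le> w!x" using wR wbx by simp
    moreover have "w!x < w!R + k" using A(6)[of x R] ij y yx xR False by simp
    ultimately show ?thesis by simp
  qed
  then have "x \<in> k_peaks k w" using ij(3) unfolding in_peaks by blast
  then show ?thesis using xR yx y by auto
qed

lemma valleyA:
  assumes d: "distinct w" and k: "0 < k" and bc: "b < c" "c < length w"
    and wbc: "w!b + k \<le> w!c"
  shows "\<exists>v. v \<in> k_valleys k w \<and> v < c"
proof -
  obtain y where y: "y \<in> {..c}" "\<forall>t\<in>{..c}. w!y \<le> w!t"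
    using finite_argmin[of "{..c}" "\<lambda>t. w!t"] by auto
  have wyb: "w!y \<le> w!b" using y bc by simp
  have yc: "y < c" using y(1) wyb wbc k by (cases "y = c") auto
  define X where "X = {x. y < x \<and> x \<le> c \<and> w!y + k \<le> w!x}"
  have cX: "c \<in> X" unfolding X_def using yc wyb wbc by simp
  have finX: "finite X" unfolding X_def by simp
  define x where "x = Min X"
  have xX: "x \<in> X" unfolding x_def using finX cX by (metis Min_in empty_iff)
  have xmin: "\<And>t. t \<in> X \<Longrightarrow> x \<le> t" unfolding x_def using finX by simp
  have x: "y < x" "x \<le> c" "w!y + k \<le> w!x" using xX unfolding X_def by auto
  have below: "w!t < w!y + k" if "y < t" "t < x" for t
  proof (rule ccontr)
    assume "\<not> w!t < w!y + k"
    then have "t \<in> X" unfolding X_def using that x by simp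
    then show False using xmin[of t] that by simp
  qed
  have "asc k w y x"
  proof (rule ascI)
    show "y < x" "x < length w" "w!y + k \<le> w!x" using x bc by auto
    fix t assume t: "y \<le> t" "t \<le> x"
    show "w!y \<le> w!t" using y(2) t x by simp
    show "w!t \<le> w!x"
    proof (cases "t = x")
      case False
      show ?thesis
      proof (cases "t = y")
        case True then show ?thesis using x by simp
      next
        case False then show ?thesis using below[of t] t \<open>t \<noteq> x\<close> x by simp
      qed
    qed simp
  next
    fix s t assume st: "y \<le> s" "s < t" "t \<le> x"
    have "w!s < w!y + k" using below[of s] st k by (cases "s = y") auto
    moreover have "w!y \<le> w!t" using y(2) st x by simp
    ultimately show "w!s < w!t + k" by simp
  qed
  then obtain i' j' where ij: "i' \<le> y" "x \<le> j'" "masc k w i' j'" using ext_asc by blast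
  note A = asc_D[OF masc_asc[OF ij(3)]]
  have "w!y \<le> w!i'" using y(2) ij yc by simp
  moreover have "w!i' \<le> w!y" using A(4)[of y] ij x by simp
  ultimately have "i' = y" using dist_eq[OF d, of i' y] ij yc bc by simp
  then have "y \<in> k_valleys k w" using ij(3) unfolding in_valleys by blast
  then show ?thesis using yc by blast
qed

lemma peakD:
  assumes d: "distinct w" and k: "0 < k" and bc: "b < c" "c < length w"
    and wbc: "w!c + k \<le> w!b"
  shows "\<exists>v. v \<in> k_peaks k w \<and> v < c"
proof -
  obtain M where b: "\<forall>x\<in>set w. x \<le> M" using has_bound by blast
  have "w!b \<le> M" "w!c \<le> M" using b bc by auto
  then have "cpl M w ! b + k \<le> cpl M w ! c" using wbc bc by (simp add: cpl_nth)
  then show ?thesis using valleyA[OF cpl_distinct[OF b d] k, of b c] bc cpl_valleys[OF b] by simp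
qed

lemma valleyD:
  assumes d: "distinct w" and k: "0 < k" and ab: "a < b" "b < R" "R \<le> length w"
    and wab: "w!b + k \<le> w!a" and wR: "R < length w \<longrightarrow> w!b + k \<le> w!R"
  shows "\<exists>p. p \<in> k_valleys k w \<and> a < p \<and> p < R"
proof -
  obtain M where b: "\<forall>x\<in>set w. x \<le> M" using has_bound by blast
  have "w!b \<le> M" "w!a \<le> M" using b ab by auto
  then have 1: "cpl M w ! a + k \<le> cpl M w ! b" using wab ab by (simp add: cpl_nth)
  have 2: "R < length w \<longrightarrow> cpl M w ! R + k \<le> cpl M w ! b"
  proof
    assume "R < length w"
    moreover have "w!R \<le> M" using b \<open>R < length w\<close> by auto
    ultimately show "cpl M w ! R + k \<le> cpl M w ! b" using wR \<open>w!b \<le> M\<close> ab by (simp add: cpl_nth)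
  qed
  show ?thesis using peakA[OF cpl_distinct[OF b d] k, of a b R] ab 1 2 cpl_peaks[OF b] by simp
qed



definition idx :: "nat set \<Rightarrow> nat \<Rightarrow> nat list" where
  "idx A L = filter (\<lambda>i. i \<in> A) [0..<L]"

lemma nths_idx: "nths xs A = map ((!) xs) (idx A (length xs))"
proof (induction xs arbitrary: A)
  case Nil then show ?case by (simp add: idx_def)
next
  case (Cons x xs)
  have u: "[0..<Suc (length xs)] = 0 # map Suc [0..<length xs]"
    by (simp add: map_Suc_upt upt_conv_Cons del: upt_Suc)
  have "idx A (length (x # xs)) = (if 0 \<in> A then [0] else []) @ map Suc (idx {j. Suc j \<in> A} (length xs))"
    unfolding idx_def using u by (simp add: filter_map o_def del: upt_Suc)
  then show ?case by (simp add: nths_Cons Cons o_def)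
qed

lemma idx_sorted: "sorted_wrt (<) (idx A L)" unfolding idx_def by (simp add: sorted_wrt_filter)
lemma idx_set: "set (idx A L) = {i \<in> A. i < L}" unfolding idx_def by auto
lemma idx_distinct: "distinct (idx A L)" unfolding idx_def by simp

lemma sw_lt: "sorted_wrt (<) ls \<Longrightarrow> i < j \<Longrightarrow> j < length ls \<Longrightarrow> (ls!i::nat) < ls!j"
  using sorted_wrt_nth_less by blast
lemma sw_le: "sorted_wrt (<) ls \<Longrightarrow> i \<le> j \<Longrightarrow> j < length ls \<Longrightarrow> (ls!i::nat) \<le> ls!j"
  using sw_lt[of ls i j] by (cases "i = j") auto

lemma sw_between:
  fixes ls :: "nat list"
  assumes s: "sorted_wrt (<) ls" and m: "Suc m < length ls" and r: "r \<in> set ls"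
    and b: "ls!m < r" "r < ls!(Suc m)"
  shows False
proof -
  obtain q where q: "q < length ls" "ls!q = (r::nat)" using r by (auto simp: in_set_conv_nth)
  show False
  proof (cases "q \<le> m")
    case True then show False using sw_le[OF s True] m q b by simp
  next
    case False then show False using sw_le[OF s, of "Suc m" q] m q b by simp
  qed
qed

lemma zig_lower:
  assumes d: "distinct w" and k: "0 < k"
  shows "k_zigzagging k (nths w (k_peaks k w \<union> k_valleys k w))"
proof -
  let ?P = "k_peaks k w" and ?V = "k_valleys k w"
  let ?A = "?P \<union> ?V"
  define zl where "zl = idx ?A (length w)"
  have xs: "nths w ?A = map ((!) w) zl" unfolding zl_def nths_idx ..
  have so: "sorted_wrt (<) zl" unfolding zl_def by (rule idx_sorted)
  have st: "set zl = ?A" unfolding zl_def idx_set using PV_lt by blast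
  have inA: "zl!m \<in> ?A" if "m < length zl" for m using that st nth_mem by blast
  have btw: "\<forall>r. zl!m < r \<and> r < zl!(Suc m) \<longrightarrow> r \<notin> ?A" if "Suc m < length zl" for m
    using sw_between[OF so that] st by blast
  have lt: "zl!m < zl!(Suc m)" if "Suc m < length zl" for m using sw_lt[OF so, of m "Suc m"] that by simp
  have stepV: "zl!(Suc m) \<in> ?P \<and> w!(zl!m) + k \<le> w!(zl!(Suc m))"
    if "Suc m < length zl" "zl!m \<in> ?V" for m
    using consec_valley[OF d k that(2) inA[OF that(1)] lt[OF that(1)] btw[OF that(1)]] .
  have stepP: "zl!(Suc m) \<in> ?V \<and> w!(zl!(Suc m)) + k \<le> w!(zl!m)"
    if "Suc m < length zl" "zl!m \<in> ?P" for m
    using consec_peak[OF d k that(2) inA[OF that(1)] lt[OF that(1)] btw[OF that(1)]] .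
  have disj: "x \<in> ?P \<Longrightarrow> x \<in> ?V \<Longrightarrow> False" for x using disjoint_PV[OF d k] by blast
  have par: "m < length zl \<Longrightarrow> (zl!m \<in> ?V \<longleftrightarrow> (zl!0 \<in> ?V \<longleftrightarrow> even m))" for m
  proof (induction m)
    case 0 then show ?case by simp
  next
    case (Suc m)
    then have ih: "zl!m \<in> ?V \<longleftrightarrow> (zl!0 \<in> ?V \<longleftrightarrow> even m)" by simp
    show ?case
    proof (cases "zl!m \<in> ?V")
      case True
      then have "zl!(Suc m) \<in> ?P" using stepV Suc.prems by blast
      then have "zl!(Suc m) \<notin> ?V" using disj by blast
      then show ?thesis using ih True by simp
    next
      case False
      have "m < length zl" using Suc.prems by simp
      then have "zl!m \<in> ?P" using inA[of m] False by auto
      then have "zl!(Suc m) \<in> ?V" using stepP Suc.prems by blast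
      then show ?thesis using ih False by simp
    qed
  qed
  have up: "w!(zl!j) + k \<le> w!(zl!(Suc j))" if "Suc j < length zl" "zl!j \<in> ?V" for j
    using stepV that by blast
  have down: "w!(zl!(Suc j)) + k \<le> w!(zl!j)" if "Suc j < length zl" "zl!j \<notin> ?V" for j
    using stepP that inA[of j] by auto
  have diffs: "\<forall>j. Suc j < length zl \<longrightarrow> int k \<le> \<bar>int (w!(zl!j)) - int (w!(zl!(Suc j)))\<bar>"
  proof (intro allI impI)
    fix j assume j: "Suc j < length zl"
    show "int k \<le> \<bar>int (w!(zl!j)) - int (w!(zl!(Suc j)))\<bar>"
      using up[OF j] down[OF j] by (cases "zl!j \<in> ?V") auto
  qed
  have zz: "zigzagging (map ((!) w) zl)"
  proof (cases "zl = []")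
    case True then show ?thesis unfolding zigzagging_def by simp
  next
    case ne: False
    show ?thesis
    proof (cases "zl!0 \<in> ?V")
      case True
      have "\<forall>j. Suc j < length zl \<longrightarrow> (if even j then w!(zl!j) < w!(zl!(Suc j)) else w!(zl!j) > w!(zl!(Suc j)))"
      proof (intro allI impI)
        fix j assume j: "Suc j < length zl"
        have "zl!j \<in> ?V \<longleftrightarrow> even j" using par[of j] j True by simp
        then show "if even j then w!(zl!j) < w!(zl!(Suc j)) else w!(zl!j) > w!(zl!(Suc j))"
          using up[OF j] down[OF j] k by auto
      qed
      then show ?thesis unfolding zigzagging_def by simp
    next
      case False
      have "\<forall>j. Suc j < length zl \<longrightarrow> (if even j then w!(zl!j) > w!(zl!(Suc j)) else w!(zl!j) < w!(zl!(Suc j)))"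
      proof (intro allI impI)
        fix j assume j: "Suc j < length zl"
        have "zl!j \<in> ?V \<longleftrightarrow> odd j" using par[of j] j False by simp
        then show "if even j then w!(zl!j) > w!(zl!(Suc j)) else w!(zl!j) < w!(zl!(Suc j))"
          using up[OF j] down[OF j] k by auto
      qed
      then show ?thesis unfolding zigzagging_def by simp
    qed
  qed
  show ?thesis unfolding xs k_zigzagging_def using zz diffs by simp
qed

lemma length_nths_PV:
  "length (nths w (k_peaks k w \<union> k_valleys k w)) = card (k_peaks k w \<union> k_valleys k w)"
proof -
  let ?A = "k_peaks k w \<union> k_valleys k w"
  have "set (idx ?A (length w)) = ?A" unfolding idx_set using PV_lt by blast
  then show ?thesis unfolding nths_idx using idx_distinct distinct_card by (metis length_map)
qed



lemma PV_finite: "finite (k_peaks k w \<union> k_valleys k w)"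
  using PV_lt by (meson finite_lessThan finite_subset lessThan_iff subsetI)

lemma PV_nonempty:
  assumes d: "distinct w" and k: "0 < k" and gap: "a < length w" "b < length w" "w!a + k \<le> w!b"
  shows "k_peaks k w \<union> k_valleys k w \<noteq> {}"
proof -
  have "a \<noteq> b" using gap k by auto
  then consider "a < b" | "b < a" by linarith
  then show ?thesis
  proof cases
    case 1 then show ?thesis using valleyA[OF d k 1 gap(2,3)] by blast
  next
    case 2 then show ?thesis using peakD[OF d k 2 gap(1,3)] by blast
  qed
qed

lemma zig_upper:
  assumes d: "distinct w" and k: "0 < k" and gap: "a < length w" "b < length w" "w!a + k \<le> w!b"
    and sub: "subseq ys w" and z: "k_zigzagging k ys"
  shows "length ys \<le> card (k_peaks k w \<union> k_valleys k w)"
proof -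
  let ?P = "k_peaks k w" and ?V = "k_valleys k w"
  let ?A = "?P \<union> ?V"
  let ?L = "length w"
  have fin: "finite ?A" by (rule PV_finite)
  have ne: "?A \<noteq> {}" by (rule PV_nonempty[OF d k gap])
  have c1: "1 \<le> card ?A" using fin ne by (simp add: Suc_le_eq card_gt_0_iff)
  obtain N where N: "ys = nths w N" using sub subseq_conv_nths by blast
  define q where "q = idx N ?L"
  have ys: "ys = map ((!) w) q" unfolding N q_def nths_idx ..
  have so: "sorted_wrt (<) q" unfolding q_def by (rule idx_sorted)
  have qL: "q!t < ?L" if "t < length q" for t
    using that nth_mem[OF that] idx_set unfolding q_def by blast
  define len where "len = length q"
  have lenys: "length ys = len" unfolding ys len_def by simp
  have ysn: "ys!t = w!(q!t)" if "t < len" for t unfolding ys using that len_def by simp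
  show ?thesis
  proof (cases "len \<le> 1")
    case True then show ?thesis using c1 lenys by simp
  next
    case len2: False
    define D2 where "D2 = (\<forall>j. Suc j < length ys \<longrightarrow> (if even j then ys!j < ys!(Suc j) else ys!j > ys!(Suc j)))"
    define mn where "mn t = (even t = D2)" for t :: nat
    have zz: "zigzagging ys" and dk: "\<forall>j. Suc j < length ys \<longrightarrow> int k \<le> \<bar>int (ys!j) - int (ys!(Suc j))\<bar>"
      using z unfolding k_zigzagging_def by auto
    have loc: "(mn t \<longrightarrow> w!(q!t) + k \<le> w!(q!(Suc t))) \<and> (\<not> mn t \<longrightarrow> w!(q!(Suc t)) + k \<le> w!(q!t))"
      if t: "Suc t < len" for t
    proof -
      have dd: "int k \<le> \<bar>int (ys!t) - int (ys!(Suc t))\<bar>" using dk t lenys by simp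
      have yy: "ys!t = w!(q!t)" "ys!(Suc t) = w!(q!(Suc t))" using ysn t by auto
      show ?thesis
      proof (cases D2)
        case True
        then have "if even t then ys!t < ys!(Suc t) else ys!t > ys!(Suc t)"
          unfolding D2_def using t lenys by simp
        then show ?thesis using dd yy True unfolding mn_def by (cases "even t") auto
      next
        case False
        then have "\<forall>j. Suc j < length ys \<longrightarrow> (if even j then ys!j > ys!(Suc j) else ys!j < ys!(Suc j))"
          using zz unfolding zigzagging_def D2_def by blast
        then have "if even t then ys!t > ys!(Suc t) else ys!t < ys!(Suc t)"
          using t lenys by simp
        then show ?thesis using dd yy False unfolding mn_def by (cases "even t") auto
      qed
    qed
    have mnS: "mn (Suc t) = (\<not> mn t)" for t unfolding mn_def by auto
    have ex: "\<exists>p. (mn t \<longrightarrow> p \<in> ?V) \<and> (\<not> mn t \<longrightarrow> p \<in> ?P) \<and> (0 < t \<longrightarrow> q!(t-1) < p)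
                 \<and> (Suc t < len \<longrightarrow> p < q!(Suc t))" if t: "t < len" for t
    proof (cases "t = 0")
      case True
      have l1: "Suc 0 < len" using len2 by simp
      have q01: "q!0 < q!1" using sw_lt[OF so, of 0 1] l1 len_def by simp
      have q1L: "q!1 < ?L" using qL[of 1] l1 len_def by simp
      show ?thesis
      proof (cases "mn 0")
        case True
        then have "w!(q!0) + k \<le> w!(q!1)" using loc[OF l1] by simp
        then obtain v where "v \<in> ?V" "v < q!1" using valleyA[OF d k q01 q1L] by blast
        then show ?thesis using True \<open>t = 0\<close> by auto
      next
        case False
        then have "w!(q!1) + k \<le> w!(q!0)" using loc[OF l1] by simp
        then obtain v where "v \<in> ?P" "v < q!1" using peakD[OF d k q01 q1L] by blast
        then show ?thesis using False \<open>t = 0\<close> by auto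
      qed
    next
      case False
      then obtain u where u: "t = Suc u" by (cases t) auto
      have ul: "Suc u < len" using t u by simp
      have qut: "q!u < q!t" using sw_lt[OF so, of u t] u t len_def by simp
      define R where "R = (if Suc t < len then q!(Suc t) else ?L)"
      have tR: "q!t < R" unfolding R_def using sw_lt[OF so, of t "Suc t"] qL[of t] t len_def by auto
      have RL: "R \<le> ?L" unfolding R_def using qL[of "Suc t"] len_def by auto
      have Rlt: "R < ?L \<Longrightarrow> Suc t < len" unfolding R_def by (cases "Suc t < len") auto
      have RS: "Suc t < len \<Longrightarrow> R = q!(Suc t)" unfolding R_def by simp
      show ?thesis
      proof (cases "mn t")
        case True
        then have mu: "\<not> mn u" using mnS[of u] u by simp
        have 1: "w!(q!t) + k \<le> w!(q!u)" using loc[OF ul] mu u by simp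
        have 2: "R < ?L \<longrightarrow> w!(q!t) + k \<le> w!R"
          using loc[of t] True Rlt RS by auto
        obtain p where p: "p \<in> ?V" "q!u < p" "p < R" using valleyD[OF d k qut tR RL 1 2] by blast
        then show ?thesis using True u RS by auto
      next
        case False
        then have mu: "mn u" using mnS[of u] u by simp
        have 1: "w!(q!u) + k \<le> w!(q!t)" using loc[OF ul] mu u by simp
        have 2: "R < ?L \<longrightarrow> w!R + k \<le> w!(q!t)"
          using loc[of t] False Rlt RS by auto
        obtain p where p: "p \<in> ?P" "q!u < p" "p < R" using peakA[OF d k qut tR RL 1 2] by blast
        then show ?thesis using False u RS by auto
      qed
    qed
    obtain f where f: "\<And>t. t < len \<Longrightarrow> (mn t \<longrightarrow> f t \<in> ?V) \<and> (\<not> mn t \<longrightarrow> f t \<in> ?P)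
        \<and> (0 < t \<longrightarrow> q!(t-1) < f t) \<and> (Suc t < len \<longrightarrow> f t < q!(Suc t))"
      using ex by metis
    have neq: "f t \<noteq> f t'" if tt: "t < t'" "t' < len" for t t'
    proof
      assume eq: "f t = f t'"
      show False
      proof (cases "mn t = mn t'")
        case True
        then have "even t = even t'" unfolding mn_def by auto
        then have "Suc t \<noteq> t'" by auto
        then have st: "Suc t \<le> t' - 1" using tt by simp
        have "q!(Suc t) \<le> q!(t'-1)" using sw_le[OF so st] tt len_def by simp
        moreover have "f t < q!(Suc t)" using f[of t] tt by simp
        moreover have "q!(t'-1) < f t'" using f[of t'] tt by simp
        ultimately show False using eq by simp
      next
        case False
        then show False using f[of t] f[of t'] tt eq disjoint_PV[OF d k] by (cases "mn t") auto
      qed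
    qed
    have inj: "inj_on f {..<len}"
    proof (rule inj_onI)
      fix t t' assume "t \<in> {..<len}" "t' \<in> {..<len}" "f t = f t'"
      then show "t = t'" using neq[of t t'] neq[of t' t] by (metis lessThan_iff linorder_neqE_nat)
    qed
    have img: "f ` {..<len} \<subseteq> ?A"
    proof
      fix x assume "x \<in> f ` {..<len}"
      then obtain t where "t < len" "x = f t" by auto
      then show "x \<in> ?A" using f[of t] by (cases "mn t") auto
    qed
    have "card {..<len} \<le> card ?A" by (rule card_inj_on_le[OF inj img fin])
    then show ?thesis using lenys by simp
  qed
qed



lemma zs_facts:
  assumes d: "distinct w" and k: "0 < k" and gap: "a < length w" "b < length w" "w!a + k \<le> w!b"
  shows "length (nths w (k_peaks k w \<union> k_valleys k w)) = zs k w"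
    "zs k w = card (k_peaks k w) + card (k_valleys k w)"
proof -
  let ?A = "k_peaks k w \<union> k_valleys k w"
  define Z where "Z = {length ys | ys. subseq ys w \<and> k_zigzagging k ys}"
  have mem: "card ?A \<in> Z"
  proof -
    have "subseq (nths w ?A) w" using subseq_conv_nths by blast
    moreover have "k_zigzagging k (nths w ?A)" by (rule zig_lower[OF d k])
    ultimately have "length (nths w ?A) \<in> Z" unfolding Z_def by blast
    then show ?thesis using length_nths_PV by simp
  qed
  have ub: "\<forall>y\<in>Z. y \<le> card ?A" unfolding Z_def using zig_upper[OF d k gap] by blast
  have finZ: "finite Z" using ub by (meson finite_atMost atMost_iff finite_subset subsetI)
  have zsA: "zs k w = card ?A" unfolding zs_def Z_def[symmetric]
    by (rule Max_eqI[OF finZ]) (use ub mem in auto)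
  show "length (nths w ?A) = zs k w" using zsA length_nths_PV by simp
  have finP: "finite (k_peaks k w)" "finite (k_valleys k w)" using PV_finite[of k w] by auto
  have "k_peaks k w \<inter> k_valleys k w = {}" using disjoint_PV[OF d k] by blast
  then show "zs k w = card (k_peaks k w) + card (k_valleys k w)"
    using zsA card_Un_disjoint[OF finP] by simp
qed

lemma perm_gap:
  fixes n :: nat
  assumes w: "w \<in> permutations_of_set {1..n}" and n: "n \<ge> 2" and k: "k \<le> n - 1"
  shows "\<exists>a b. a < length w \<and> b < length w \<and> w!a + k \<le> w!b"
proof -
  have s: "set w = {1..n}" using permutations_of_setD[OF w] by simp
  have "1 \<in> set w" "n \<in> set w" using s n by auto
  then obtain a b where "a < length w" "w!a = 1" "b < length w" "w!b = n"
    by (metis in_set_conv_nth)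
  then show ?thesis using k n by (intro exI[of _ a] exI[of _ b]) auto
qed

lemma cpl_perm:
  fixes n :: nat
  assumes w: "w \<in> permutations_of_set {1..n}"
  shows "cpl (n+1) w \<in> permutations_of_set {1..n}" "\<forall>x\<in>set w. x \<le> n + 1"
proof -
  have s: "set w = {1..n}" and d: "distinct w" using permutations_of_setD[OF w] by auto
  show b: "\<forall>x\<in>set w. x \<le> n + 1" using s by auto
  have "set (cpl (n+1) w) = (\<lambda>x. n + 1 - x) ` {1..n}" unfolding cpl_def s[symmetric] by simp
  also have "\<dots> = {1..n}"
  proof (intro equalityI subsetI)
    fix y assume "y \<in> (\<lambda>x. n + 1 - x) ` {1..n}" then show "y \<in> {1..n}" by auto
  next
    fix y assume y: "y \<in> {1..n}"
    then have "y = n + 1 - (n + 1 - y)" "n + 1 - y \<in> {1..n}" by auto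
    then show "y \<in> (\<lambda>x. n + 1 - x) ` {1..n}" by blast
  qed
  finally show "cpl (n+1) w \<in> permutations_of_set {1..n}"
    using cpl_distinct[OF b d] by blast
qed

theorem proposition2p8:
  fixes n k :: nat
  assumes "n \<ge> 2" and "1 \<le> k" and "k \<le> n - 1"
  shows "(\<forall>w\<in>permutations_of_set {1..n}.
            k_zigzagging k (nths w (k_peaks k w \<union> k_valleys k w)) \<and>
            length (nths w (k_peaks k w \<union> k_valleys k w)) = zs k w \<and>
            zs k w = card (k_peaks k w) + card (k_valleys k w))
       \<and> E_zs n k = 2 / fact n * (\<Sum>w\<in>permutations_of_set {1..n}. real (card (k_peaks k w)))"
proof -
  let ?S = "permutations_of_set {1..n}"
  have k: "0 < k" using assms by simp
  have each: "k_zigzagging k (nths w (k_peaks k w \<union> k_valleys k w)) \<and>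
            length (nths w (k_peaks k w \<union> k_valleys k w)) = zs k w \<and>
            zs k w = card (k_peaks k w) + card (k_valleys k w)" if w: "w \<in> ?S" for w
  proof -
    have d: "distinct w" using permutations_of_setD[OF w] by simp
    obtain a b where gap: "a < length w" "b < length w" "w!a + k \<le> w!b"
      using perm_gap[OF w assms(1,3)] by blast
    show ?thesis using zig_lower[OF d k] zs_facts[OF d k gap] by simp
  qed
  have sv: "(\<Sum>w\<in>?S. real (card (k_valleys k w))) = (\<Sum>w\<in>?S. real (card (k_peaks k w)))"
  proof -
    have "(\<Sum>w\<in>?S. real (card (k_valleys k w))) = (\<Sum>w\<in>?S. real (card (k_peaks k (cpl (n+1) w))))"
    proof (rule sum.cong)
      fix x assume "x \<in> ?S"
      then show "real (card (k_valleys k x)) = real (card (k_peaks k (cpl (n+1) x)))"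
        using cpl_peaks[OF cpl_perm(2)[OF \<open>x \<in> ?S\<close>], of k] by simp
    qed simp
    also have "\<dots> = (\<Sum>w\<in>?S. real (card (k_peaks k w)))"
    proof (rule sum.reindex_bij_witness[of _ "cpl (n+1)" "cpl (n+1)"])
      fix a assume a: "a \<in> ?S"
      show "cpl (n+1) (cpl (n+1) a) = a" using cpl_cpl[OF cpl_perm(2)[OF a]] .
      show "cpl (n+1) a \<in> ?S" using cpl_perm(1)[OF a] .
      show "real (card (k_peaks k (cpl (n+1) a))) = real (card (k_peaks k (cpl (n+1) a)))" ..
    next
      fix b assume b: "b \<in> ?S"
      show "cpl (n+1) (cpl (n+1) b) = b" using cpl_cpl[OF cpl_perm(2)[OF b]] .
      show "cpl (n+1) b \<in> ?S" using cpl_perm(1)[OF b] .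
    qed
    finally show ?thesis .
  qed
  have "(\<Sum>w\<in>?S. real (zs k w)) = (\<Sum>w\<in>?S. real (card (k_peaks k w)) + real (card (k_valleys k w)))"
    by (rule sum.cong) (auto simp: each)
  also have "\<dots> = 2 * (\<Sum>w\<in>?S. real (card (k_peaks k w)))"
    unfolding sum.distrib sv by simp
  finally have "E_zs n k = 2 * (\<Sum>w\<in>?S. real (card (k_peaks k w))) / fact n"
    unfolding E_zs_def by simp
  then show ?thesis using each by simp
qed

end
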